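(* Suppose there is a norm $\|\cdot\|$ on $\mathbb R^n$ and constants $q\in(1,2]$, $L>0$ such that $f$ is $q$-uniformly smooth on $\mathrm{dom}(\Psi)$ with constant $L$, and let $p\ge2$, $\mu>0$. (a) If $\Psi$ is $p$-uniformly convex on $\mathrm{dom}(\Psi)$ with constant $\mu$, then $(\mathcal D,\mathrm{gap})$ satisfies the $(q,r)$-growth property with $r=q/p$ and $M=L(p/\mu)^{q/p}$. (b) If $\Psi=\delta_C$ for a closed convex set $C\subseteq\mathbb R^n$ that is $p$-uniformly convex with constant $\mu$, and $\ell:=\inf_{x\in C}\|\nabla f(x)\|^*>0$, then $(\mathcal D,\mathrm{gap})$ satisfies the $(q,r)$-growth property with $r=q/p$ and $M=L(p/(\ell\mu))^{q/p}$.
   Context: Let $f,\Psi:\mathbb{R}^n\to\mathbb{R}\cup\{\infty\}$ be closed proper convex functions such that (A1) $f$ is differentiable on $\mathrm{dom}(\Psi)$, and (A2) for every $x\in\mathrm{dom}(f)$ the set $\arg\min_s\{\langle\nabla f(x),s\rangle+\Psi(s)\}$ is nonempty. $f^*,\Psi^*$ denote convex conjugates; $\arg\min_y\{\langle g,y\rangle+\Psi(y)\}=\partial\Psi^*(-g)$. $D_f(y,x)=f(y)-f(x)-\langle\nabla f(x),y-x\rangle$. $\mathrm{gap}(x,u)=f(x)+\Psi(x)+f^*(u)+\Psi^*(-u)$. $\mathcal{D}(x,s,\theta)=D_f(x+\theta(s-x),x)+\Psi(x+\theta(s-x))-(1-\theta)\Psi(x)-\theta\Psi(s)$. $\|\cdot\|^*$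 is the dual norm. $(q,r)$-growth property: there is a finite $M>0$ such that for all $x\in\mathrm{dom}(\Psi)$, $g=\nabla f(x)$, $s\in\partial\Psi^*(-g)$: $\mathcal D(x,s,\theta)\le\frac{M\theta^q}{q}\mathrm{gap}(x,g)^r$ for all $\theta\in[0,1]$. $f$ is $q$-uniformly smooth on $C$ with constant $L$ if for all $x,y\in C$, $\theta\in[0,1]$: $f(x+\theta(y-x))\ge(1-\theta)f(x)+\theta f(y)-\frac Lq\theta(1-\theta)\|y-x\|^q$. $\Psi$ is $p$-uniformly convex on $C$ with constant $\mu$ if for all $x,y\in C$, $\theta\in[0,1]$: $\Psi(x+\theta(y-x))\le(1-\theta)\Psi(x)+\theta\Psi(y)-\frac\mu p\theta(1-\theta)\|y-x\|^p$. A closed convex set $C$ is $p$-uniformly convex with constant $\mu$ if for all $x,y\in C$, $\theta\in[0,1]$ and $\|z\|\le1$: $x+\theta(y-x)+\frac\mu p\theta(1-\theta)\|y-x\|^pz\in C$. *)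

theory Defs
  imports "HOL-Analysis.Analysis"
begin

definition edom :: "(real^'n::finite \<Rightarrow> ereal) \<Rightarrow> (real^'n) set" where
  "edom f = {x. f x < \<infinity>}"

definition epigraph :: "(real^'n::finite \<Rightarrow> ereal) \<Rightarrow> ((real^'n) \<times> real) set" where
  "epigraph f = {(x, t). f x \<le> ereal t}"

definition closed_proper_convex :: "(real^'n::finite \<Rightarrow> ereal) \<Rightarrow> bool" where
  "closed_proper_convex f \<longleftrightarrow>
     closed (epigraph f) \<and> convex (epigraph f) \<and>
     (\<forall>x. f x \<noteq> -\<infinity>) \<and> (\<exists>x. f x < \<infinity>)"

definition is_norm :: "(real^'n::finite \<Rightarrow> real) \<Rightarrow> bool" where
  "is_norm N \<longleftrightarrow> (\<forall>x. 0 \<le> N x) \<and> (\<forall>x. N x = 0 \<longleftrightarrow> x = 0) \<and>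
     (\<forall>c x. N (c *\<^sub>R x) = \<bar>c\<bar> * N x) \<and> (\<forall>x y. N (x + y) \<le> N x + N y)"

definition dual_norm :: "(real^'n::finite \<Rightarrow> real) \<Rightarrow> real^'n \<Rightarrow> real" where
  "dual_norm N g = Sup {g \<bullet> x | x. N x \<le> 1}"

definition conj :: "(real^'n::finite \<Rightarrow> ereal) \<Rightarrow> real^'n \<Rightarrow> ereal" where
  "conj f u = (SUP x. ereal (u \<bullet> x) - f x)"

definition esubdiff :: "(real^'n::finite \<Rightarrow> ereal) \<Rightarrow> real^'n \<Rightarrow> (real^'n) set" where
  "esubdiff h u = {s. \<bar>h u\<bar> \<noteq> \<infinity> \<and> (\<forall>v. h u + ereal ((v - u) \<bullet> s) \<le> h v)}"

definition indicator_fn :: "(real^'n::finite) set \<Rightarrow> real^'n \<Rightarrow> ereal" where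
  "indicator_fn C x = (if x \<in> C then 0 else \<infinity>)"

definition bregman :: "(real^'n::finite \<Rightarrow> ereal) \<Rightarrow> (real^'n \<Rightarrow> real^'n) \<Rightarrow> real^'n \<Rightarrow> real^'n \<Rightarrow> ereal" where
  "bregman f gradf y x = f y - f x - ereal (gradf x \<bullet> (y - x))"

definition gap :: "(real^'n::finite \<Rightarrow> ereal) \<Rightarrow> (real^'n \<Rightarrow> ereal) \<Rightarrow> real^'n \<Rightarrow> real^'n \<Rightarrow> ereal" where
  "gap f \<Psi> x u = f x + \<Psi> x + conj f u + conj \<Psi> (-u)"

definition Dcal :: "(real^'n::finite \<Rightarrow> ereal) \<Rightarrow> (real^'n \<Rightarrow> real^'n) \<Rightarrow> (real^'n \<Rightarrow> ereal)
     \<Rightarrow> real^'n \<Rightarrow> real^'n \<Rightarrow> real \<Rightarrow> ereal" where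
  "Dcal f gradf \<Psi> x s \<theta> =
     bregman f gradf (x + \<theta> *\<^sub>R (s - x)) x + \<Psi> (x + \<theta> *\<^sub>R (s - x))
     - ereal (1 - \<theta>) * \<Psi> x - ereal \<theta> * \<Psi> s"

text \<open>Power of a nonnegative extended real (infinity stays infinity for positive exponent).\<close>

definition epowr :: "ereal \<Rightarrow> real \<Rightarrow> ereal" where
  "epowr a r = (if a = \<infinity> then \<infinity> else ereal (real_of_ereal a powr r))"

definition growth_property ::
  "(real^'n::finite \<Rightarrow> ereal) \<Rightarrow> (real^'n \<Rightarrow> real^'n) \<Rightarrow> (real^'n \<Rightarrow> ereal) \<Rightarrow> real \<Rightarrow> real \<Rightarrow> real \<Rightarrow> bool" where
  "growth_property f gradf \<Psi> q r M \<longleftrightarrow>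
     (\<forall>x \<in> edom \<Psi>. \<forall>s \<in> esubdiff (conj \<Psi>) (- gradf x). \<forall>\<theta> \<in> {0..1}.
        Dcal f gradf \<Psi> x s \<theta> \<le> ereal (M * \<theta> powr q / q) * epowr (gap f \<Psi> x (gradf x)) r)"

definition uniformly_smooth_on ::
  "(real^'n::finite \<Rightarrow> real) \<Rightarrow> real \<Rightarrow> real \<Rightarrow> (real^'n) set \<Rightarrow> (real^'n \<Rightarrow> ereal) \<Rightarrow> bool" where
  "uniformly_smooth_on N q L C f \<longleftrightarrow>
     (\<forall>x\<in>C. \<forall>y\<in>C. \<forall>\<theta>\<in>{0..1}.
        ereal (1 - \<theta>) * f x + ereal \<theta> * f y - ereal (L / q * \<theta> * (1 - \<theta>) * N (y - x) powr q)
          \<le> f (x + \<theta> *\<^sub>R (y - x)))"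

definition uniformly_convex_fn_on ::
  "(real^'n::finite \<Rightarrow> real) \<Rightarrow> real \<Rightarrow> real \<Rightarrow> (real^'n) set \<Rightarrow> (real^'n \<Rightarrow> ereal) \<Rightarrow> bool" where
  "uniformly_convex_fn_on N p \<mu> C \<Psi> \<longleftrightarrow>
     (\<forall>x\<in>C. \<forall>y\<in>C. \<forall>\<theta>\<in>{0..1}.
        \<Psi> (x + \<theta> *\<^sub>R (y - x))
          \<le> ereal (1 - \<theta>) * \<Psi> x + ereal \<theta> * \<Psi> y - ereal (\<mu> / p * \<theta> * (1 - \<theta>) * N (y - x) powr p))"

definition uniformly_convex_set ::
  "(real^'n::finite \<Rightarrow> real) \<Rightarrow> real \<Rightarrow> real \<Rightarrow> (real^'n) set \<Rightarrow> bool" where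
  "uniformly_convex_set N p \<mu> C \<longleftrightarrow> closed C \<and> convex C \<and>
     (\<forall>x\<in>C. \<forall>y\<in>C. \<forall>\<theta>\<in>{0..1}. \<forall>z. N z \<le> 1 \<longrightarrow>
        x + \<theta> *\<^sub>R (y - x) + (\<mu> / p * \<theta> * (1 - \<theta>) * N (y - x) powr p) *\<^sub>R z \<in> C)"

end

theory Submission
  imports Defs
begin


lemma isnorm_sum:
  assumes "is_norm N" "finite A"
  shows "N (sum h A) \<le> (\<Sum>i\<in>A. N (h i))"
  using assms(2)
proof (induction A rule: finite_induct)
  case empty
  have "N 0 = 0" using assms(1) unfolding is_norm_def by blast
  then show ?case by simp
next
  case (insert a A)
  then show ?case using assms(1) unfolding is_norm_def
    by (smt (verit, ccfv_threshold) sum.insert)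
qed

lemma isnorm_upper:
  fixes N :: "real^'n::finite \<Rightarrow> real"
  assumes "is_norm N"
  shows "\<exists>K. \<forall>x. N x \<le> K * norm x"
proof -
  let ?K = "\<Sum>b\<in>Basis. N b"
  { fix x :: "real^'n"
    have "N x = N (\<Sum>b\<in>Basis. (x \<bullet> b) *\<^sub>R b)" by (simp add: euclidean_representation)
    also have "\<dots> \<le> (\<Sum>b\<in>Basis. N ((x \<bullet> b) *\<^sub>R b))" by (rule isnorm_sum[OF assms]) simp
    also have "\<dots> = (\<Sum>b\<in>Basis. \<bar>x \<bullet> b\<bar> * N b)" using assms unfolding is_norm_def by simp
    also have "\<dots> \<le> (\<Sum>b\<in>Basis. norm x * N b)"
      apply (rule sum_mono) apply (rule mult_right_mono)
      using Basis_le_norm assms unfolding is_norm_def by auto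
    also have "\<dots> = ?K * norm x" by (simp add: sum_distrib_left mult.commute)
    finally have "N x \<le> ?K * norm x" . }
  then show ?thesis by blast
qed

lemma isnorm_cont:
  fixes N :: "real^'n::finite \<Rightarrow> real"
  assumes "is_norm N"
  shows "continuous_on S N"
proof -
  obtain K where K: "\<And>x. N x \<le> K * norm x" using isnorm_upper[OF assms] by blast
  have tri: "\<And>x y. N (x + y) \<le> N x + N y" and neg: "\<And>x. N (-x) = N x"
    using assms unfolding is_norm_def apply blast
    using assms unfolding is_norm_def by (metis abs_minus_cancel abs_one mult_1 scaleR_minus1_left)
  have "\<And>x y. \<bar>N x - N y\<bar> \<le> K * norm (x - y)"
  proof -
    fix x y :: "real^'n"
    have "N x \<le> N y + N (x - y)" using tri[of y "x - y"] by simp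
    moreover have "N y \<le> N x + N (y - x)" using tri[of x "y - x"] by simp
    moreover have "N (y - x) = N (x - y)" using neg[of "x - y"] by simp
    ultimately show "\<bar>N x - N y\<bar> \<le> K * norm (x - y)" using K[of "x - y"] by linarith
  qed
  then have "\<And>x y. dist (N x) (N y) \<le> K * dist x y" by (simp add: dist_real_def dist_norm)
  then have "lipschitz_on (max K 0) S N"
  proof (intro lipschitz_onI)
    fix x y assume "x \<in> S" "y \<in> S"
    have "K * dist x y \<le> max K 0 * dist x y" by (rule mult_right_mono) auto
    then show "dist (N x) (N y) \<le> max K 0 * dist x y" using \<open>\<And>x y. dist (N x) (N y) \<le> K * dist x y\<close>[of x y] by linarith
  qed simp
  then show ?thesis using lipschitz_on_continuous_on by blast
qed

lemma isnorm_lower: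
  fixes N :: "real^'n::finite \<Rightarrow> real"
  assumes "is_norm N"
  shows "\<exists>c>0. \<forall>x. c * norm x \<le> N x"
proof -
  let ?S = "sphere (0::real^'n) 1"
  have "compact ?S" by simp
  moreover have "?S \<noteq> {}"
  proof -
    obtain b :: "real^'n" where "b \<in> Basis" using nonempty_Basis by blast
    then have "b \<in> ?S" by simp
    then show ?thesis by blast
  qed
  ultimately obtain x0 where x0: "x0 \<in> ?S" "\<And>y. y \<in> ?S \<Longrightarrow> N x0 \<le> N y"
    using continuous_attains_inf[OF _ _ isnorm_cont[OF assms]] by metis
  have "x0 \<noteq> 0" using x0 by auto
  then have c: "N x0 > 0" using assms unfolding is_norm_def by (metis less_eq_real_def)
  { fix x :: "real^'n"
    have "N x0 * norm x \<le> N x"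
    proof (cases "x = 0")
      case True then show ?thesis using assms unfolding is_norm_def by auto
    next
      case False
      then have "(1 / norm x) *\<^sub>R x \<in> ?S" by simp
      then have "N x0 \<le> N ((1 / norm x) *\<^sub>R x)" by (rule x0(2))
      also have "\<dots> = N x / norm x" using assms unfolding is_norm_def by simp
      finally show ?thesis using False by (simp add: field_simps)
    qed }
  then show ?thesis using c by blast
qed

lemma dual_norm_props:
  fixes N :: "real^'n::finite \<Rightarrow> real"
  assumes "is_norm N"
  shows "bdd_above {g \<bullet> x | x. N x \<le> 1}" "0 \<le> dual_norm N g"
    "\<And>z. N z \<le> 1 \<Longrightarrow> g \<bullet> z \<le> dual_norm N g"
proof -
  obtain c where c: "c > 0" "\<And>x. c * norm x \<le> N x" using isnorm_lower[OF assms] by blast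
  have "\<And>x. N x \<le> 1 \<Longrightarrow> g \<bullet> x \<le> norm g / c"
  proof -
    fix x :: "real^'n" assume "N x \<le> 1"
    then have "norm x \<le> 1 / c" using c by (smt (verit, ccfv_SIG) le_divide_eq_1_pos mult.commute pos_le_divide_eq)
    then have "norm g * norm x \<le> norm g * (1/c)" by (rule mult_left_mono) simp
    then show "g \<bullet> x \<le> norm g / c" using norm_cauchy_schwarz[of g x] by simp
  qed
  then show bdd: "bdd_above {g \<bullet> x | x. N x \<le> 1}" by (auto intro!: bdd_aboveI)
  show z: "\<And>z. N z \<le> 1 \<Longrightarrow> g \<bullet> z \<le> dual_norm N g"
    unfolding dual_norm_def by (rule cSup_upper[OF _ bdd]) auto
  have "N 0 \<le> 1" using assms unfolding is_norm_def by (metis order.refl zero_le_one)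
  from z[OF this] show "0 \<le> dual_norm N g" by simp
qed



lemma cpc_not_minf: "closed_proper_convex \<Psi> \<Longrightarrow> \<Psi> x \<noteq> -\<infinity>"
  unfolding closed_proper_convex_def by blast

lemma cpc_finite:
  assumes "closed_proper_convex \<Psi>" "x \<in> edom \<Psi>"
  shows "\<Psi> x = ereal (real_of_ereal (\<Psi> x))"
  using assms cpc_not_minf[OF assms(1), of x] unfolding edom_def
  by (cases "\<Psi> x") auto

lemma cpc_convex:
  assumes "closed_proper_convex \<Psi>" "\<Psi> x = ereal a" "\<Psi> y = ereal b" "0 \<le> \<theta>" "\<theta> \<le> 1"
  shows "\<Psi> (x + \<theta> *\<^sub>R (y - x)) \<le> ereal ((1 - \<theta>) * a + \<theta> * b)"
proof -
  have cv: "convex (epigraph \<Psi>)" using assms(1) unfolding closed_proper_convex_def by blast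
  have "(x, a) \<in> epigraph \<Psi>" "(y, b) \<in> epigraph \<Psi>" using assms unfolding epigraph_def by auto
  from convexD[OF cv this, of "1 - \<theta>" \<theta>] assms(4,5)
  have "((1 - \<theta>) *\<^sub>R x + \<theta> *\<^sub>R y, (1 - \<theta>) * a + \<theta> * b) \<in> epigraph \<Psi>" by simp
  moreover have "(1 - \<theta>) *\<^sub>R x + \<theta> *\<^sub>R y = x + \<theta> *\<^sub>R (y - x)" by (simp add: algebra_simps)
  ultimately show ?thesis unfolding epigraph_def by simp
qed

lemma edom_convex:
  assumes "closed_proper_convex \<Psi>" "x \<in> edom \<Psi>" "y \<in> edom \<Psi>" "0 \<le> \<theta>" "\<theta> \<le> 1"
  shows "x + \<theta> *\<^sub>R (y - x) \<in> edom \<Psi>"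
proof -
  have "\<Psi> (x + \<theta> *\<^sub>R (y - x)) \<le> ereal ((1 - \<theta>) * real_of_ereal (\<Psi> x) + \<theta> * real_of_ereal (\<Psi> y))"
    by (rule cpc_convex[OF assms(1) cpc_finite[OF assms(1,2)] cpc_finite[OF assms(1,3)] assms(4,5)])
  also have "\<dots> < \<infinity>" by simp
  finally show ?thesis unfolding edom_def by simp
qed

lemma conj_le:
  assumes "\<And>y r. \<Psi> y = ereal r \<Longrightarrow> u \<bullet> y - r \<le> c" "\<And>y. \<Psi> y \<noteq> -\<infinity>"
  shows "conj \<Psi> u \<le> ereal c"
  unfolding conj_def
proof (rule SUP_least)
  fix y
  show "ereal (u \<bullet> y) - \<Psi> y \<le> ereal c"
  proof (cases "\<Psi> y")
    case (real r) then show ?thesis using assms(1)[of y r] by simp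
  next
    case PInf then show ?thesis by simp
  next
    case MInf then show ?thesis using assms(2) by simp
  qed
qed

lemma conj_ge: "\<Psi> y = ereal r \<Longrightarrow> ereal (u \<bullet> y - r) \<le> conj \<Psi> u"
  unfolding conj_def by (rule SUP_upper2[of y]) auto

lemma fenchel_point:
  fixes \<Psi> :: "real^'n::finite \<Rightarrow> ereal"
  assumes cpc: "closed_proper_convex \<Psi>" and s: "s \<in> esubdiff (conj \<Psi>) u"
  shows "\<exists>cs. \<Psi> s = ereal cs \<and> (\<forall>y r. \<Psi> y = ereal r \<longrightarrow> u \<bullet> y - r \<le> u \<bullet> s - cs)"
proof -
  have fin: "\<bar>conj \<Psi> u\<bar> \<noteq> \<infinity>" and sub: "\<And>v. conj \<Psi> u + ereal ((v - u) \<bullet> s) \<le> conj \<Psi> v"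
    using s unfolding esubdiff_def by auto
  obtain cu where cu: "conj \<Psi> u = ereal cu" using fin by (cases "conj \<Psi> u") auto
  have nm: "\<And>y. \<Psi> y \<noteq> -\<infinity>" using cpc_not_minf[OF cpc] by blast
  have cl: "closed (epigraph \<Psi>)" and cv: "convex (epigraph \<Psi>)"
    using cpc unfolding closed_proper_convex_def by auto
  define t0 where "t0 = u \<bullet> s - cu"
  have key: "\<Psi> s \<le> ereal t0"
  proof (rule ccontr)
    assume "\<not> \<Psi> s \<le> ereal t0"
    then have "(s, t0) \<notin> epigraph \<Psi>" unfolding epigraph_def by simp
    from separating_hyperplane_closed_point[OF cv cl this]
    obtain a b where ab: "a \<bullet> (s, t0) < b" "\<And>z. z \<in> epigraph \<Psi> \<Longrightarrow> a \<bullet> z > b" by blast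
    obtain a1 a2 where a: "a = (a1, a2)" by (cases a)
    have ab1: "a1 \<bullet> s + a2 * t0 < b" using ab(1) a by (simp add: inner_Pair)
    have ab2: "\<And>y r. \<Psi> y \<le> ereal r \<Longrightarrow> b < a1 \<bullet> y + a2 * r"
      using ab(2) a unfolding epigraph_def by (auto simp: inner_Pair)
    obtain y0 where "\<Psi> y0 < \<infinity>" using cpc unfolding closed_proper_convex_def by blast
    then obtain r0 where r0: "\<Psi> y0 = ereal r0" using nm[of y0] by (cases "\<Psi> y0") auto
    have a2: "a2 \<ge> 0"
    proof (rule ccontr)
      assume "\<not> a2 \<ge> 0"
      define r where "r = max r0 ((b - a1 \<bullet> y0) / a2)"
      have "\<Psi> y0 \<le> ereal r" using r0 r_def by simp
      from ab2[OF this] have "b < a1 \<bullet> y0 + a2 * r" .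
      moreover have "a2 * r \<le> a2 * ((b - a1 \<bullet> y0) / a2)"
        using \<open>\<not> a2 \<ge> 0\<close> r_def by (intro mult_left_mono_neg) auto
      ultimately show False using \<open>\<not> a2 \<ge> 0\<close> by simp
    qed
    show False
    proof (cases "a2 = 0")
      case True
      define u' where "u' = u - a1"
      have cb: "conj \<Psi> u' \<le> ereal (cu - b)"
      proof (rule conj_le[OF _ nm])
        fix y r assume yr: "\<Psi> y = ereal r"
        have "ereal (u \<bullet> y - r) \<le> ereal cu" using conj_ge[of \<Psi> y r u, OF yr] cu by simp
        moreover have "b < a1 \<bullet> y" using ab2[of y r] yr True by simp
        ultimately show "u' \<bullet> y - r \<le> cu - b" unfolding u'_def by (simp add: inner_diff_left)
      qed
      have "cu + (u' - u) \<bullet> s \<le> cu - b" using order_trans[OF sub[of u'] cb] cu by simp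
      then show False using ab1 True unfolding u'_def by (simp add: inner_diff_left)
    next
      case False
      with a2 have a2p: "a2 > 0" by simp
      define u' where "u' = - (1 / a2) *\<^sub>R a1"
      have cb: "conj \<Psi> u' \<le> ereal (- b / a2)"
      proof (rule conj_le[OF _ nm])
        fix y r assume yr: "\<Psi> y = ereal r"
        have "b < a1 \<bullet> y + a2 * r" using ab2[of y r] yr by simp
        then have "b / a2 < (a1 \<bullet> y) / a2 + r" using a2p by (simp add: field_simps)
        then show "u' \<bullet> y - r \<le> - b / a2" unfolding u'_def by simp
      qed
      have "cu + (u' - u) \<bullet> s \<le> - b / a2" using order_trans[OF sub[of u'] cb] cu by simp
      moreover have "t0 < b / a2 - (a1 \<bullet> s) / a2" using ab1 a2p by (simp add: field_simps)
      ultimately show False unfolding u'_def t0_def by (simp add: inner_diff_left)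
    qed
  qed
  obtain cs where cs: "\<Psi> s = ereal cs" using key nm[of s] by (cases "\<Psi> s") auto
  have cst: "cs \<le> t0" using key cs by simp
  have cuy: "\<And>y r. \<Psi> y = ereal r \<Longrightarrow> u \<bullet> y - r \<le> cu"
  proof -
    fix y r assume "\<Psi> y = ereal r"
    from conj_ge[of \<Psi> y r u, OF this] cu show "u \<bullet> y - r \<le> cu" by simp
  qed
  have "\<forall>y r. \<Psi> y = ereal r \<longrightarrow> u \<bullet> y - r \<le> u \<bullet> s - cs"
  proof (intro allI impI)
    fix y r assume "\<Psi> y = ereal r"
    from cuy[OF this] cst show "u \<bullet> y - r \<le> u \<bullet> s - cs" unfolding t0_def by linarith
  qed
  then show ?thesis using cs by blast
qed



lemma lim_1m:
  fixes a b :: real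
  assumes "\<And>\<eta>. 0 < \<eta> \<Longrightarrow> \<eta> < 1 \<Longrightarrow> (1 - \<eta>) * b \<le> a"
  shows "b \<le> a"
proof -
  have "((\<lambda>\<eta>. (1 - \<eta>) * b) \<longlongrightarrow> (1 - 0) * b) (at_right 0)"
    by (intro tendsto_intros)
  then have t: "((\<lambda>\<eta>. (1 - \<eta>) * b) \<longlongrightarrow> b) (at_right 0)" by simp
  have "eventually (\<lambda>\<eta>. (1 - \<eta>) * b \<le> a) (at_right (0::real))"
    unfolding eventually_at_right_field using assms by (intro exI[of _ 1]) auto
  from tendsto_le[OF trivial_limit_at_right_real tendsto_const t this] show ?thesis .
qed

lemma deriv_quot:
  fixes F :: "real^'n::finite \<Rightarrow> real"
  assumes "(F has_derivative (\<lambda>h. g \<bullet> h)) (at x)"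
  shows "((\<lambda>\<eta>. (F (x + \<eta> *\<^sub>R v) - F x) / \<eta>) \<longlongrightarrow> g \<bullet> v) (at_right 0)"
proof -
  have d1: "((\<lambda>\<eta>::real. x + \<eta> *\<^sub>R v) has_derivative (\<lambda>h. h *\<^sub>R v)) (at 0)"
    by (auto intro!: derivative_eq_intros)
  have "(F has_derivative (\<lambda>h. g \<bullet> h)) (at ((\<lambda>\<eta>::real. x + \<eta> *\<^sub>R v) 0))" using assms by simp
  from has_derivative_compose[OF d1 this]
  have "((\<lambda>\<eta>. F (x + \<eta> *\<^sub>R v)) has_derivative (\<lambda>h. g \<bullet> (h *\<^sub>R v))) (at 0)" .
  moreover have "(\<lambda>h. g \<bullet> (h *\<^sub>R v)) = (*) (g \<bullet> v)" by (auto simp: mult.commute)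
  ultimately have "((\<lambda>\<eta>. F (x + \<eta> *\<^sub>R v)) has_field_derivative (g \<bullet> v)) (at 0)"
    by (simp add: has_field_derivative_def)
  then have "((\<lambda>\<eta>. (F (x + \<eta> *\<^sub>R v) - F (x + 0 *\<^sub>R v)) / (\<eta> - 0)) \<longlongrightarrow> g \<bullet> v) (at 0)"
    by (simp only: has_field_derivative_iff)
  then have "((\<lambda>\<eta>. (F (x + \<eta> *\<^sub>R v) - F x) / \<eta>) \<longlongrightarrow> g \<bullet> v) (at 0)" by simp
  then show ?thesis by (rule tendsto_mono[OF at_le, rotated]) simp
qed

lemma bregman_bound:
  fixes f :: "real^'n::finite \<Rightarrow> ereal" and N :: "real^'n \<Rightarrow> real"
  assumes smooth: "uniformly_smooth_on N q L C f"
    and N: "is_norm N"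
    and der: "((\<lambda>y. real_of_ereal (f y)) has_derivative (\<lambda>h. g \<bullet> h)) (at x)"
    and fin: "\<And>y. y \<in> C \<Longrightarrow> f y = ereal (real_of_ereal (f y))"
    and seg: "\<And>t. 0 \<le> t \<Longrightarrow> t \<le> 1 \<Longrightarrow> x + t *\<^sub>R (s - x) \<in> C"
    and th: "0 \<le> \<theta>" "\<theta> \<le> 1" and q: "0 < q"
  shows "real_of_ereal (f (x + \<theta> *\<^sub>R (s - x))) - real_of_ereal (f x) - \<theta> * (g \<bullet> (s - x))
         \<le> L / q * \<theta> powr q * N (s - x) powr q"
proof -
  define fr where "fr = (\<lambda>y. real_of_ereal (f y))"
  define v where "v = \<theta> *\<^sub>R (s - x)"
  define c where "c = L / q * \<theta> powr q * N (s - x) powr q"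
  define A where "A = fr (x + v) - fr x"
  have xC: "x \<in> C" using seg[of 0] by simp
  have xvC: "x + v \<in> C" using seg[OF th] v_def by simp
  have Nv: "N v powr q = \<theta> powr q * N (s - x) powr q"
  proof -
    have "N v = \<theta> * N (s - x)" using N th unfolding is_norm_def v_def by simp
    moreover have "0 \<le> N (s - x)" using N unfolding is_norm_def by simp
    ultimately show ?thesis using th by (simp add: powr_mult)
  qed
  have ineq: "A - (1 - \<eta>) * c \<le> (fr (x + \<eta> *\<^sub>R v) - fr x) / \<eta>" if eta: "0 < \<eta>" "\<eta> < 1" for \<eta>
  proof -
    have h: "ereal (1 - \<eta>) * f x + ereal \<eta> * f (x + v) - ereal (L / q * \<eta> * (1 - \<eta>) * N ((x + v) - x) powr q)
          \<le> f (x + \<eta> *\<^sub>R ((x + v) - x))"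
      using smooth xC xvC eta unfolding uniformly_smooth_on_def
      apply -
      apply (drule bspec[OF _ xC])
      apply (drule bspec[OF _ xvC])
      apply (drule bspec[of _ _ \<eta>])
      by auto
    have e: "x + \<eta> *\<^sub>R v = x + (\<eta> * \<theta>) *\<^sub>R (s - x)" by (simp add: v_def)
    have "x + (\<eta> * \<theta>) *\<^sub>R (s - x) \<in> C" using seg th eta by (simp add: mult_le_one)
    then have f3: "f (x + \<eta> *\<^sub>R v) = ereal (fr (x + \<eta> *\<^sub>R v))" using fin e unfolding fr_def by metis
    have f1: "f x = ereal (fr x)" using fin[OF xC] unfolding fr_def .
    have f2: "f (x + v) = ereal (fr (x + v))" using fin[OF xvC] unfolding fr_def .
    from h have "ereal (1 - \<eta>) * ereal (fr x) + ereal \<eta> * ereal (fr (x + v)) - ereal (L / q * \<eta> * (1 - \<eta>) * N v powr q)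
          \<le> ereal (fr (x + \<eta> *\<^sub>R v))" unfolding f1 f2 f3[symmetric] by simp
    then have "(1 - \<eta>) * fr x + \<eta> * fr (x + v) - L / q * \<eta> * (1 - \<eta>) * N v powr q
          \<le> fr (x + \<eta> *\<^sub>R v)" by simp
    then have "\<eta> * (A - (1 - \<eta>) * c) \<le> fr (x + \<eta> *\<^sub>R v) - fr x"
      unfolding A_def c_def Nv by (simp add: algebra_simps)
    then show ?thesis using eta by (simp add: field_simps)
  qed
  have t1: "((\<lambda>\<eta>. (fr (x + \<eta> *\<^sub>R v) - fr x) / \<eta>) \<longlongrightarrow> g \<bullet> v) (at_right 0)"
    using deriv_quot[OF der[folded fr_def]] by simp
  have t2: "((\<lambda>\<eta>. A - (1 - \<eta>) * c) \<longlongrightarrow> A - (1 - 0) * c) (at_right 0)" by (intro tendsto_intros)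
  have ev: "eventually (\<lambda>\<eta>. A - (1 - \<eta>) * c \<le> (fr (x + \<eta> *\<^sub>R v) - fr x) / \<eta>) (at_right (0::real))"
    unfolding eventually_at_right_field using ineq by (intro exI[of _ 1]) auto
  from tendsto_le[OF trivial_limit_at_right_real t1 t2 ev] have "A - c \<le> g \<bullet> v" by simp
  then show ?thesis unfolding A_def c_def v_def fr_def by simp
qed


lemma core_real:
  fixes d a K L q p \<theta> :: real
  assumes "0 \<le> d" "0 \<le> a" "0 < K" "0 < p" "0 < q" "0 < L" "0 \<le> \<theta>"
    and h: "d powr p \<le> K * a"
  shows "L / q * \<theta> powr q * d powr q \<le> L * K powr (q / p) * \<theta> powr q / q * a powr (q / p)"
proof -
  have "d powr q = (d powr p) powr (q / p)" using assms by (simp add: powr_powr)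
  also have "\<dots> \<le> (K * a) powr (q / p)" using assms by (intro powr_mono2) auto
  also have "\<dots> = K powr (q / p) * a powr (q / p)" using assms by (simp add: powr_mult)
  finally have "d powr q \<le> K powr (q / p) * a powr (q / p)" .
  then have "L / q * \<theta> powr q * d powr q \<le> L / q * \<theta> powr q * (K powr (q / p) * a powr (q / p))"
    using assms by (intro mult_left_mono) auto
  then show ?thesis by (simp add: field_simps)
qed

lemma main_generic:
  fixes f \<Psi> :: "real^'n::finite \<Rightarrow> ereal"
    and gradf :: "real^'n \<Rightarrow> real^'n"
    and N :: "real^'n \<Rightarrow> real"
    and q L p K :: real
  assumes f_cpc: "closed_proper_convex f"
    and \<Psi>_cpc: "closed_proper_convex \<Psi>"
    and A1: "\<forall>x \<in> edom \<Psi>. x \<in> interior (edom f) \<and>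
               ((\<lambda>y. real_of_ereal (f y)) has_derivative (\<lambda>h. gradf x \<bullet> h)) (at x)"
    and N_norm: "is_norm N"
    and q: "1 < q"
    and L: "0 < L"
    and smooth: "uniformly_smooth_on N q L (edom \<Psi>) f"
    and p: "0 < p"
    and x: "x \<in> edom \<Psi>" and s: "s \<in> esubdiff (conj \<Psi>) (- gradf x)"
    and th: "\<theta> \<in> {0..1}" and K: "0 < K"
    and hyp: "N (s - x) powr p \<le> K * (real_of_ereal (\<Psi> x) - real_of_ereal (\<Psi> s) + gradf x \<bullet> (x - s))"
  shows "Dcal f gradf \<Psi> x s \<theta> \<le> ereal (L * K powr (q / p) * \<theta> powr q / q) * epowr (gap f \<Psi> x (gradf x)) (q / p)"
proof -
  define g where "g = gradf x"
  define fr where "fr = (\<lambda>y. real_of_ereal (f y))"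
  obtain cs where cs: "\<Psi> s = ereal cs" and opt: "\<And>y r. \<Psi> y = ereal r \<Longrightarrow> (- g) \<bullet> y - r \<le> (- g) \<bullet> s - cs"
    using fenchel_point[OF \<Psi>_cpc s] unfolding g_def by blast
  have sd: "s \<in> edom \<Psi>" using cs unfolding edom_def by simp
  define cx where "cx = real_of_ereal (\<Psi> x)"
  have cx: "\<Psi> x = ereal cx" using cpc_finite[OF \<Psi>_cpc x] cx_def by simp
  have th0: "0 \<le> \<theta>" "\<theta> \<le> 1" using th by auto
  define x\<theta> where "x\<theta> = x + \<theta> *\<^sub>R (s - x)"
  have xtd: "x\<theta> \<in> edom \<Psi>" using edom_convex[OF \<Psi>_cpc x sd th0] x\<theta>_def by simp
  have fin: "\<And>y. y \<in> edom \<Psi> \<Longrightarrow> f y = ereal (fr y)"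
  proof -
    fix y assume "y \<in> edom \<Psi>"
    then have "y \<in> edom f" using A1 interior_subset by blast
    then show "f y = ereal (fr y)" unfolding fr_def by (rule cpc_finite[OF f_cpc])
  qed
  have seg: "\<And>t. 0 \<le> t \<Longrightarrow> t \<le> 1 \<Longrightarrow> x + t *\<^sub>R (s - x) \<in> edom \<Psi>"
    using edom_convex[OF \<Psi>_cpc x sd] by blast
  have der: "(fr has_derivative (\<lambda>h. g \<bullet> h)) (at x)" using A1 x unfolding fr_def g_def by blast
  have B: "fr x\<theta> - fr x - \<theta> * (g \<bullet> (s - x)) \<le> L / q * \<theta> powr q * N (s - x) powr q"
    using bregman_bound[OF smooth N_norm der[unfolded fr_def] _ seg th0] fin q unfolding fr_def x\<theta>_def by simp
  define ct where "ct = real_of_ereal (\<Psi> x\<theta>)"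
  have ct: "\<Psi> x\<theta> = ereal ct" using cpc_finite[OF \<Psi>_cpc xtd] ct_def by simp
  have ctle: "ct \<le> (1 - \<theta>) * cx + \<theta> * cs"
    using cpc_convex[OF \<Psi>_cpc cx cs th0] ct x\<theta>_def by simp
  have "Dcal f gradf \<Psi> x s \<theta> = ereal (fr x\<theta> - fr x - \<theta> * (g \<bullet> (s - x)) + ct - (1 - \<theta>) * cx - \<theta> * cs)"
    unfolding Dcal_def bregman_def x\<theta>_def[symmetric] using fin[OF xtd] fin[OF x] ct cx cs
    by (simp add: x\<theta>_def g_def inner_scaleR_right)
  also have "\<dots> \<le> ereal (L / q * \<theta> powr q * N (s - x) powr q)" using B ctle by simp
  finally have D: "Dcal f gradf \<Psi> x s \<theta> \<le> ereal (L / q * \<theta> powr q * N (s - x) powr q)" .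
  define a where "a = cx - cs + g \<bullet> (x - s)"
  have Nnn: "0 \<le> N (s - x)" using N_norm unfolding is_norm_def by blast
  have hyp': "N (s - x) powr p \<le> K * a" using hyp cx cs unfolding a_def g_def by simp
  have a0: "0 \<le> a"
  proof -
    have "0 \<le> K * a" using hyp' by (meson order_trans powr_ge_zero)
    then show ?thesis using K by (simp add: zero_le_mult_iff)
  qed
  have gap: "ereal a \<le> gap f \<Psi> x g"
  proof -
    have c1: "ereal (g \<bullet> x - fr x) \<le> conj f g" by (rule conj_ge[of f x "fr x" g, OF fin[OF x]])
    have c2: "ereal ((- g) \<bullet> s - cs) \<le> conj \<Psi> (- g)" by (rule conj_ge[of \<Psi> s cs "- g", OF cs])
    have "ereal a = ereal (fr x) + ereal cx + ereal (g \<bullet> x - fr x) + ereal ((- g) \<bullet> s - cs)"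
      unfolding a_def by (simp add: inner_diff_right)
    also have "\<dots> \<le> f x + \<Psi> x + conj f g + conj \<Psi> (- g)"
      using fin[OF x] cx c1 c2 by (intro add_mono) auto
    finally show ?thesis unfolding gap_def .
  qed
  have ep: "ereal (a powr (q / p)) \<le> epowr (gap f \<Psi> x g) (q / p)"
  proof (cases "gap f \<Psi> x g = \<infinity>")
    case True then show ?thesis unfolding epowr_def by simp
  next
    case False
    with gap obtain G where G: "gap f \<Psi> x g = ereal G" by (cases "gap f \<Psi> x g") auto
    then have "a \<le> G" using gap by simp
    then have "a powr (q / p) \<le> G powr (q / p)" using a0 q p by (intro powr_mono2) auto
    then show ?thesis unfolding epowr_def using G by simp
  qed
  have coef: "0 \<le> L * K powr (q / p) * \<theta> powr q / q" using L K q th0 by simp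
  have "ereal (L / q * \<theta> powr q * N (s - x) powr q) \<le> ereal (L * K powr (q / p) * \<theta> powr q / q * a powr (q / p))"
    using core_real[OF Nnn a0 K p _ L th0(1) hyp'] q by simp
  also have "\<dots> = ereal (L * K powr (q / p) * \<theta> powr q / q) * ereal (a powr (q / p))" by simp
  also have "\<dots> \<le> ereal (L * K powr (q / p) * \<theta> powr q / q) * epowr (gap f \<Psi> x g) (q / p)"
    using ep coef by (intro ereal_mult_left_mono) auto
  finally show ?thesis using D unfolding g_def by simp
qed

theorem proposition4:
  fixes f \<Psi> :: "real^'n::finite \<Rightarrow> ereal"
    and gradf :: "real^'n \<Rightarrow> real^'n"
    and N :: "real^'n \<Rightarrow> real"
    and q L p \<mu> :: real
  assumes f_cpc: "closed_proper_convex f"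
    and \<Psi>_cpc: "closed_proper_convex \<Psi>"
    and A1: "\<forall>x \<in> edom \<Psi>. x \<in> interior (edom f) \<and>
               ((\<lambda>y. real_of_ereal (f y)) has_derivative (\<lambda>h. gradf x \<bullet> h)) (at x)"
    and A2: "\<forall>x \<in> edom \<Psi>. esubdiff (conj \<Psi>) (- gradf x) \<noteq> {}"
    and N_norm: "is_norm N"
    and q: "1 < q" "q \<le> 2"
    and L: "0 < L"
    and smooth: "uniformly_smooth_on N q L (edom \<Psi>) f"
    and p: "2 \<le> p"
    and \<mu>: "0 < \<mu>"
  shows "(uniformly_convex_fn_on N p \<mu> (edom \<Psi>) \<Psi> \<longrightarrow>
            growth_property f gradf \<Psi> q (q / p) (L * (p / \<mu>) powr (q / p)))
       \<and> (\<forall>C. \<Psi> = indicator_fn C \<and> uniformly_convex_set N p \<mu> C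
              \<and> (INF x\<in>C. dual_norm N (gradf x)) > 0 \<longrightarrow>
            growth_property f gradf \<Psi> q (q / p)
              (L * (p / ((INF x\<in>C. dual_norm N (gradf x)) * \<mu>)) powr (q / p)))"
proof (intro conjI allI impI)
  have p0: "0 < p" using p by simp
  have q1: "1 < q" using q by simp
  assume uc: "uniformly_convex_fn_on N p \<mu> (edom \<Psi>) \<Psi>"
  show "growth_property f gradf \<Psi> q (q / p) (L * (p / \<mu>) powr (q / p))"
    unfolding growth_property_def
  proof (intro ballI)
    fix x s and \<theta> :: real assume x: "x \<in> edom \<Psi>" and s: "s \<in> esubdiff (conj \<Psi>) (- gradf x)" and th: "\<theta> \<in> {0..1}"
    define g where "g = gradf x"
    obtain cs where cs: "\<Psi> s = ereal cs" and opt: "\<And>y r. \<Psi> y = ereal r \<Longrightarrow> (- g) \<bullet> y - r \<le> (- g) \<bullet> s - cs"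
      using fenchel_point[OF \<Psi>_cpc s] unfolding g_def by blast
    have sd: "s \<in> edom \<Psi>" using cs unfolding edom_def by simp
    define cx where "cx = real_of_ereal (\<Psi> x)"
    have cx: "\<Psi> x = ereal cx" using cpc_finite[OF \<Psi>_cpc x] cx_def by simp
    define d where "d = N (s - x)"
    have dsym: "N (x - s) = d" unfolding d_def using N_norm unfolding is_norm_def
      by (metis abs_minus_cancel abs_one minus_diff_eq mult_1 scaleR_minus1_left)
    define a where "a = cx - cs + g \<bullet> (x - s)"
    have "\<mu> / p * d powr p \<le> a"
    proof (rule lim_1m)
      fix \<eta> :: real assume eta: "0 < \<eta>" "\<eta> < 1"
      define y where "y = s + \<eta> *\<^sub>R (x - s)"
      have yd: "y \<in> edom \<Psi>" using edom_convex[OF \<Psi>_cpc sd x, of \<eta>] eta y_def by simp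
      define cy where "cy = real_of_ereal (\<Psi> y)"
      have cy: "\<Psi> y = ereal cy" using cpc_finite[OF \<Psi>_cpc yd] cy_def by simp
      have "\<Psi> y \<le> ereal (1 - \<eta>) * \<Psi> s + ereal \<eta> * \<Psi> x - ereal (\<mu> / p * \<eta> * (1 - \<eta>) * N (x - s) powr p)"
        using uc sd x eta unfolding uniformly_convex_fn_on_def y_def
        apply -
        apply (drule bspec[OF _ sd])
        apply (drule bspec[OF _ x])
        apply (drule bspec[of _ _ \<eta>])
        by auto
      then have c1: "cy \<le> (1 - \<eta>) * cs + \<eta> * cx - \<mu> / p * \<eta> * (1 - \<eta>) * d powr p"
        using cy cs cx dsym by simp
      have c2: "(- g) \<bullet> y - cy \<le> (- g) \<bullet> s - cs" by (rule opt[OF cy])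
      have "(- g) \<bullet> y = (- g) \<bullet> s - \<eta> * (g \<bullet> (x - s))" unfolding y_def by (simp add: inner_add_right)
      with c1 c2 have "\<eta> * ((1 - \<eta>) * (\<mu> / p * d powr p)) \<le> \<eta> * a" unfolding a_def
        by (simp add: algebra_simps)
      then show "(1 - \<eta>) * (\<mu> / p * d powr p) \<le> a" using eta(1) by (rule mult_left_le_imp_le)
    qed
    then have hyp: "N (s - x) powr p \<le> p / \<mu> * a" using \<mu> p0 unfolding d_def by (simp add: field_simps)
    show "Dcal f gradf \<Psi> x s \<theta> \<le> ereal (L * (p / \<mu>) powr (q / p) * \<theta> powr q / q) * epowr (gap f \<Psi> x (gradf x)) (q / p)"
      by (rule main_generic[OF f_cpc \<Psi>_cpc A1 N_norm q1 L smooth p0 x s th])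
         (use \<mu> p0 hyp cx cs in \<open>auto simp: a_def g_def\<close>)
  qed
next
  have p0: "0 < p" using p by simp
  have q1: "1 < q" using q by simp
  fix C assume asm: "\<Psi> = indicator_fn C \<and> uniformly_convex_set N p \<mu> C \<and> (INF x\<in>C. dual_norm N (gradf x)) > 0"
  define l where "l = (INF x\<in>C. dual_norm N (gradf x))"
  have \<Psi>C: "\<Psi> = indicator_fn C" and ucs: "uniformly_convex_set N p \<mu> C" and l0: "l > 0"
    using asm l_def by auto
  have edC: "edom \<Psi> = C" unfolding \<Psi>C edom_def indicator_fn_def by auto
  show "growth_property f gradf \<Psi> q (q / p) (L * (p / ((INF x\<in>C. dual_norm N (gradf x)) * \<mu>)) powr (q / p))"
    unfolding growth_property_def l_def[symmetric]
  proof (intro ballI)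
    fix x s and \<theta> :: real assume x: "x \<in> edom \<Psi>" and s: "s \<in> esubdiff (conj \<Psi>) (- gradf x)" and th: "\<theta> \<in> {0..1}"
    define g where "g = gradf x"
    obtain cs where cs: "\<Psi> s = ereal cs" and opt: "\<And>y r. \<Psi> y = ereal r \<Longrightarrow> (- g) \<bullet> y - r \<le> (- g) \<bullet> s - cs"
      using fenchel_point[OF \<Psi>_cpc s] unfolding g_def by blast
    have sC: "s \<in> C" using cs unfolding \<Psi>C indicator_fn_def by (auto split: if_splits)
    have xC: "x \<in> C" using x edC by simp
    have cs0: "cs = 0" using cs sC unfolding \<Psi>C indicator_fn_def by simp
    have opt': "\<And>y. y \<in> C \<Longrightarrow> g \<bullet> s \<le> g \<bullet> y"
    proof -
      fix y assume "y \<in> C"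
      then have "\<Psi> y = ereal 0" unfolding \<Psi>C indicator_fn_def by simp
      from opt[OF this] cs0 show "g \<bullet> s \<le> g \<bullet> y" by simp
    qed
    define d where "d = N (s - x)"
    have dsym: "N (x - s) = d" unfolding d_def using N_norm unfolding is_norm_def
      by (metis abs_minus_cancel abs_one minus_diff_eq mult_1 scaleR_minus1_left)
    define a where "a = g \<bullet> (x - s)"
    have a0: "0 \<le> a" using opt'[OF xC] unfolding a_def by (simp add: inner_diff_right)
    have ldn: "l \<le> dual_norm N g"
      unfolding l_def g_def
      by (rule cINF_lower[OF _ xC]) (auto intro!: bdd_belowI[of _ 0] dual_norm_props(2)[OF N_norm])
    have "l * \<mu> / p * d powr p \<le> a"
    proof (rule lim_1m)
      fix \<eta> :: real assume eta: "0 < \<eta>" "\<eta> < 1"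
      define k where "k = \<mu> / p * (1 - \<eta>) * d powr p"
      have k0: "0 \<le> k" using \<mu> p0 eta unfolding k_def by simp
      have kz: "k * (g \<bullet> z) \<le> a" if z: "N z \<le> 1" for z
      proof -
        have nz: "N (- z) \<le> 1" using z N_norm unfolding is_norm_def
          by (metis abs_minus_cancel abs_one mult_1 scaleR_minus1_left)
        define w where "w = s + \<eta> *\<^sub>R (x - s) + (\<mu> / p * \<eta> * (1 - \<eta>) * N (x - s) powr p) *\<^sub>R (- z)"
        have "w \<in> C" using ucs sC xC eta nz unfolding uniformly_convex_set_def w_def
          apply -
          apply (elim conjE)
          apply (drule bspec[OF _ sC])
          apply (drule bspec[OF _ xC])
          apply (drule bspec[of _ _ \<eta>])
          by auto
        from opt'[OF this] have "g \<bullet> s \<le> g \<bullet> w" .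
        then have "\<eta> * (k * (g \<bullet> z)) \<le> \<eta> * a"
          unfolding w_def a_def k_def dsym by (simp add: inner_add_right inner_diff_right algebra_simps)
        then show ?thesis using eta(1) by (rule mult_left_le_imp_le)
      qed
      have "k * dual_norm N g \<le> a"
      proof (cases "k = 0")
        case True then show ?thesis using a0 by simp
      next
        case False
        then have kp: "0 < k" using k0 by simp
        have "dual_norm N g \<le> a / k" unfolding dual_norm_def
        proof (rule cSup_least)
          have "N 0 \<le> 1" using N_norm unfolding is_norm_def by (metis order.refl zero_le_one)
          then show "{g \<bullet> x |x. N x \<le> 1} \<noteq> {}" by blast
        next
          fix t assume "t \<in> {g \<bullet> x |x. N x \<le> 1}"
          then obtain z where "t = g \<bullet> z" "N z \<le> 1" by blast
          then show "t \<le> a / k" using kz kp by (simp add: field_simps mult.commute)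
        qed
        then show ?thesis using kp by (simp add: field_simps mult.commute)
      qed
      moreover have "k * l \<le> k * dual_norm N g" by (rule mult_left_mono[OF ldn k0])
      ultimately have "k * l \<le> a" by linarith
      then show "(1 - \<eta>) * (l * \<mu> / p * d powr p) \<le> a" unfolding k_def by (simp add: algebra_simps)
    qed
    then have hyp: "N (s - x) powr p \<le> p / (l * \<mu>) * a" using \<mu> p0 l0 unfolding d_def by (simp add: field_simps)
    show "Dcal f gradf \<Psi> x s \<theta> \<le> ereal (L * (p / (l * \<mu>)) powr (q / p) * \<theta> powr q / q) * epowr (gap f \<Psi> x (gradf x)) (q / p)"
    proof (rule main_generic[OF f_cpc \<Psi>_cpc A1 N_norm q1 L smooth p0 x s th])
      show "0 < p / (l * \<mu>)" using \<mu> p0 l0 by simp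
      have "\<Psi> x = 0" using xC unfolding \<Psi>C indicator_fn_def by simp
      then show "N (s - x) powr p \<le> p / (l * \<mu>) * (real_of_ereal (\<Psi> x) - real_of_ereal (\<Psi> s) + gradf x \<bullet> (x - s))"
        using hyp cs cs0 unfolding a_def g_def by simp
    qed
  qed
qed

end
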